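(* Let $K\ge2$ and $\lambda>0$. Let $\mathbf H=\mathbf M^*=\frac{1}{\sqrt{K-1}}(\mathbf I_K-\frac1K\mathbf J_K)\in\mathbb R^{K\times K}$ with columns $\mathbf h_1,\dots,\mathbf h_K$, and define $L(\mathbf W)=\sum_{n=1}^K-\log\bigl(\mathrm{softmax}(\mathbf W\mathbf h_n)\bigr)_n$ for $\mathbf W\in\mathbb R^{K\times K}$. Consider sign gradient descent with coupled weight decay, $\mathbf W_{t+1}=\mathbf W_t-\eta_t\,\mathrm{sign}\bigl(\nabla L(\mathbf W_t)+\lambda\mathbf W_t\bigr)$, $\mathbf W_0=\mathbf 0$, with $\mathrm{sign}$ acting entrywise, and let $\alpha_t=\langle\mathbf W_t\mathbf W_t^\top,\hat{\mathbf J}\rangle_F$ with $\hat{\mathbf J}=\frac1K\mathbf 1_K\mathbf 1_K^\top$. Then there exists a sequence of learning rates $\eta_t>0$ with $\eta_t\to0$ as $t\to\infty$ such that $\alpha_t\to0$ as $t\to\infty$.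
   Context: $\mathbf I_K$ is the identity, $\mathbf 1_K$ the all-ones vector, $\mathbf J_K=\mathbf 1_K\mathbf 1_K^\top$, $\langle \mathbf A,\mathbf B\rangle_F=\mathrm{Tr}(\mathbf A^\top\mathbf B)$, $\mathrm{softmax}(z)_k=e^{z_k}/\sum_j e^{z_j}$, $\mathrm{sign}(0)=0$. "Coupled" weight decay means $\lambda\mathbf W_t$ is added to the gradient inside the sign. *)

theory Defs
  imports "HOL-Analysis.Analysis"
begin

text \<open>Matrices in R^{K x K} are rendered as real^'k^'k with 'k a finite index type, K = CARD('k).
  The Frobenius inner product is the inner product of real^'k^'k.\<close>

definition Hmat :: "real^'k^'k" where
  "Hmat = (\<chi> i j. (1 / sqrt (real CARD('k) - 1)) *
                   ((if i = j then 1 else 0) - 1 / real CARD('k)))"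

definition softmax :: "real^'k \<Rightarrow> real^'k" where
  "softmax z = (\<chi> k. exp (z $ k) / (\<Sum>j\<in>UNIV. exp (z $ j)))"

definition lossL :: "real^'k^'k \<Rightarrow> real" where
  "lossL W = (\<Sum>n\<in>UNIV. - ln (softmax (W *v column n Hmat) $ n))"

text \<open>Gradient with respect to the Frobenius inner product.\<close>
definition gradL :: "real^'k^'k \<Rightarrow> real^'k^'k" where
  "gradL W = (THE D. GDERIV lossL W :> D)"

definition sign_mat :: "real^'k^'k \<Rightarrow> real^'k^'k" where
  "sign_mat A = (\<chi> i j. sgn (A $ i $ j))"

fun signgd :: "(nat \<Rightarrow> real) \<Rightarrow> real \<Rightarrow> nat \<Rightarrow> real^'k^'k" where
  "signgd \<eta> lam 0 = 0"
| "signgd \<eta> lam (Suc t) =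
     signgd \<eta> lam t - \<eta> t *\<^sub>R sign_mat (gradL (signgd \<eta> lam t) + lam *\<^sub>R signgd \<eta> lam t)"

definition Jhat :: "real^'k^'k" where
  "Jhat = (\<chi> i j. 1 / real CARD('k))"

definition alpha :: "real^'k^'k \<Rightarrow> real" where
  "alpha W = inner (W ** transpose W) (Jhat :: real^'k^'k)"

end

theory Submission
  imports Defs
begin

definition Emat :: "'k::finite \<Rightarrow> 'k \<Rightarrow> real^'k^'k" where
  "Emat n j = (\<chi> i l. if i = j then Hmat $ l $ n else 0)"

lemma z_inner: "(W *v column n Hmat) $ j = inner W (Emat n j)"
proof -
  have h: "\<And>i. (\<Sum>ia\<in>UNIV. W $ i $ ia * (if i = j then Hmat $ ia $ n else 0)) = (if i = j then (\<Sum>ia\<in>UNIV. W $ j $ ia * Hmat $ ia $ n) else 0)"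
    by simp
  then show ?thesis
    by (simp add: matrix_vector_mult_def column_def inner_vec_def Emat_def h)
qed

lemma gderiv_inner: "GDERIV (\<lambda>W. inner W D) W :> D"
  unfolding gderiv_def by (rule bounded_linear_imp_has_derivative) (rule bounded_linear_inner_left)

lemma GDERIV_sum:
  assumes "finite A" "\<And>a. a \<in> A \<Longrightarrow> GDERIV (f a) x :> D a"
  shows "GDERIV (\<lambda>x. \<Sum>a\<in>A. f a x) x :> (\<Sum>a\<in>A. D a)"
  using assms unfolding gderiv_def inner_sum_right by (intro has_derivative_sum) auto

definition SS :: "'k::finite \<Rightarrow> real^'k^'k \<Rightarrow> real" where
  "SS n W = (\<Sum>j\<in>UNIV. exp (inner W (Emat n j)))"

lemma SS_pos: "SS n W > 0"
  unfolding SS_def by (intro sum_pos) auto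

lemma lossL_eq: "lossL W = (\<Sum>n\<in>UNIV. ln (SS n W) - inner W (Emat n n))"
proof -
  have "- ln (softmax (W *v column n Hmat) $ n) = ln (SS n W) - inner W (Emat n n)" for n
    using SS_pos[of n W]
    by (simp add: softmax_def z_inner SS_def[symmetric] ln_div)
  then show ?thesis unfolding lossL_def by simp
qed

definition GD :: "real^'k^'k \<Rightarrow> real^'k^'k" where
  "GD W = (\<Sum>n\<in>UNIV. inverse (SS n W) *\<^sub>R (\<Sum>j\<in>UNIV. exp (inner W (Emat n j)) *\<^sub>R Emat n j) - Emat n n)"

lemma GDERIV_loss: "GDERIV lossL W :> GD W"
proof -
  have "GDERIV (\<lambda>W. \<Sum>n\<in>UNIV. ln (SS n W) - inner W (Emat n n)) W :> GD W"
    unfolding GD_def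
  proof (rule GDERIV_sum, simp, rule GDERIV_diff)
    fix n
    have "GDERIV (SS n) W :> (\<Sum>j\<in>UNIV. exp (inner W (Emat n j)) *\<^sub>R Emat n j)"
      unfolding SS_def
      by (rule GDERIV_sum, simp, rule GDERIV_DERIV_compose[OF gderiv_inner], rule DERIV_exp)
    then show "GDERIV (\<lambda>W. ln (SS n W)) W :> inverse (SS n W) *\<^sub>R (\<Sum>j\<in>UNIV. exp (inner W (Emat n j)) *\<^sub>R Emat n j)"
      by (rule GDERIV_DERIV_compose) (rule DERIV_ln, rule SS_pos)
  qed (rule gderiv_inner)
  then show ?thesis using lossL_eq by (metis (no_types, lifting) ext)
qed

lemma gradL_eq: "gradL W = GD W"
  unfolding gradL_def
proof (rule the_equality)
  show "GDERIV lossL W :> GD W" by (rule GDERIV_loss)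
  fix D assume "GDERIV lossL W :> D"
  then have "(\<lambda>h. inner h D) = (\<lambda>h. inner h (GD W))"
    using GDERIV_loss[of W] unfolding gderiv_def by (rule has_derivative_unique)
  then have "inner (D - GD W) D = inner (D - GD W) (GD W)" by metis
  then have "inner (D - GD W) (D - GD W) = 0" by (simp add: inner_diff_right)
  then show "D = GD W" by simp
qed

definition stm :: "real \<Rightarrow> real \<Rightarrow> real^'k^'k" where
  "stm x y = (\<chi> i j. if i = j then x else y)"

definition phi :: "real \<Rightarrow> real \<Rightarrow> real" where
  "phi k a = (1 / sqrt (k - 1)) / (exp (a * (1 / sqrt (k - 1))) + k - 1)"

lemma sum_if_eq: "(\<Sum>j\<in>(UNIV::'k::finite set). (if j = n then A else B)) = A + (real CARD('k) - 1) * B"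
proof -
  have "(\<Sum>j\<in>(UNIV::'k set). (if j = n then A else B)) = (\<Sum>j\<in>(UNIV::'k set). (if j = n then A - B else 0) + B)"
    by (intro sum.cong) auto
  also have "\<dots> = (A - B) + real CARD('k) * B" by (simp add: sum.distrib)
  finally show ?thesis by (simp add: algebra_simps)
qed

lemma GD_stm:
  assumes "CARD('k::finite) \<ge> 2"
  shows "GD (stm x y :: real^'k^'k) = stm (- (real CARD('k) - 1) * phi (real CARD('k)) (x - y)) (phi (real CARD('k)) (x - y))"
proof -
  define k where "k = real CARD('k)"
  define c where "c = 1 / sqrt (k - 1)"
  define a where "a = x - y"
  define Z where "Z = exp (a * c) + k - 1"
  have k2: "k \<ge> 2" using assms unfolding k_def by simp
  have Zpos: "Z > 0" unfolding Z_def using k2 by (smt (verit) exp_gt_zero)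
  have H: "Hmat $ l $ n = c * ((if l = n then 1 else 0) - 1/k)" for l n :: 'k
    unfolding Hmat_def k_def c_def by simp
  have rowsum: "(\<Sum>n\<in>UNIV. Hmat $ l $ n) = 0" for l :: 'k
    using k2 by (simp add: H sum_distrib_left[symmetric] sum_subtractf k_def)
  have colsum: "(\<Sum>l\<in>UNIV. Hmat $ l $ n) = 0" for n :: 'k
    using k2 by (simp add: H sum_distrib_left[symmetric] sum_subtractf k_def)
  have inn: "inner (stm x y :: real^'k^'k) (Emat n j) = a * Hmat $ j $ n" for n j :: 'k
  proof -
    have h: "\<And>i. (\<Sum>l\<in>UNIV. (stm x y :: real^'k^'k) $ i $ l * (if i = j then Hmat $ l $ n else 0)) = (if i = j then (\<Sum>l\<in>UNIV. (stm x y :: real^'k^'k) $ j $ l * Hmat $ l $ n) else 0)"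
      by simp
    have "inner (stm x y :: real^'k^'k) (Emat n j) = (\<Sum>l\<in>UNIV. (stm x y :: real^'k^'k) $ j $ l * Hmat $ l $ n)"
      by (simp add: inner_vec_def Emat_def h)
    also have "\<dots> = (\<Sum>l\<in>UNIV. (if l = j then a * Hmat $ l $ n else 0) + y * Hmat $ l $ n)"
      by (intro sum.cong) (auto simp: stm_def a_def algebra_simps)
    also have "\<dots> = a * Hmat $ j $ n"
      by (simp add: sum.distrib sum_distrib_left[symmetric] colsum)
    finally show ?thesis .
  qed
  have ex: "exp (inner (stm x y :: real^'k^'k) (Emat n j)) = (if j = n then exp (a * c) else 1) * exp (- (a * c / k))" for n j :: 'k
    by (simp add: inn H algebra_simps exp_diff exp_minus divide_inverse)
  define E where "E = exp (- (a * c / k))"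
  have Epos: "E > 0" unfolding E_def by simp
  have SSv: "SS n (stm x y :: real^'k^'k) = Z * E" for n :: 'k
  proof -
    have "SS n (stm x y :: real^'k^'k) = (\<Sum>j\<in>UNIV. (if j = n then exp (a * c) else 1)) * E"
      unfolding SS_def ex E_def by (simp add: sum_distrib_right)
    then show ?thesis by (simp add: sum_if_eq Z_def k_def)
  qed
  have entry: "GD (stm x y :: real^'k^'k) $ i $ l = (\<Sum>n\<in>UNIV. (1/Z - (k/Z) * (if i = n then 1 else 0)) * Hmat $ l $ n)" for i l :: 'k
  proof -
    have h1: "(\<Sum>j\<in>UNIV. exp (inner (stm x y :: real^'k^'k) (Emat n j)) * (Emat n j $ i $ l)) = exp (inner (stm x y :: real^'k^'k) (Emat n i)) * Hmat $ l $ n" for n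
      by (simp add: Emat_def if_distrib cong: if_cong)
    have h2: "inverse (SS n (stm x y :: real^'k^'k)) * (exp (inner (stm x y :: real^'k^'k) (Emat n i)) * Hmat $ l $ n) - Emat n n $ i $ l
       = (1/Z - (k/Z) * (if i = n then 1 else 0)) * Hmat $ l $ n" for n
    proof -
      have ex': "exp (inner (stm x y :: real^'k^'k) (Emat n i)) = (if i = n then exp (a * c) else 1) * E"
        using ex E_def by simp
      have hZ: "exp (a * c) = Z - k + 1" unfolding Z_def by simp
      have Enn: "Emat n n $ i $ l = (if i = n then Hmat $ l $ n else 0)" by (simp add: Emat_def)
      show ?thesis unfolding ex' Enn SSv
        using Zpos Epos by (cases "i = n") (simp_all add: hZ field_simps)
    qed
    show ?thesis unfolding GD_def by (simp add: h1 h2)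
  qed
  have "GD (stm x y :: real^'k^'k) $ i $ l = (if i = l then - (k - 1) * (c / Z) else c / Z)" for i l :: 'k
  proof -
    have "GD (stm x y :: real^'k^'k) $ i $ l = (1/Z) * (\<Sum>n\<in>UNIV. Hmat $ l $ n) - (k/Z) * Hmat $ l $ i"
    proof -
      have "(\<Sum>n\<in>UNIV. (1/Z - (k/Z) * (if i = n then 1 else 0)) * Hmat $ l $ n)
          = (\<Sum>n\<in>UNIV. (1/Z) * Hmat $ l $ n - (if i = n then (k/Z) * Hmat $ l $ n else 0))"
        by (intro sum.cong) (auto simp: algebra_simps)
      also have "\<dots> = (1/Z) * (\<Sum>n\<in>UNIV. Hmat $ l $ n) - (k/Z) * Hmat $ l $ i"
        by (simp add: sum_subtractf sum_distrib_left)
      finally show ?thesis unfolding entry .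
    qed
    also have "\<dots> = (if i = l then - (k - 1) * (c / Z) else c / Z)"
      using k2 Zpos unfolding rowsum by (simp add: H field_simps)
    finally show ?thesis .
  qed
  moreover have "phi (real CARD('k)) (x - y) = c / Z"
    unfolding phi_def Z_def c_def a_def k_def by simp
  ultimately show ?thesis
    by (simp add: vec_eq_iff stm_def k_def)
qed


lemma stm_add: "stm a b + r *\<^sub>R stm x y = (stm (a + r * x) (b + r * y) :: real^'k::finite^'k)"
  by (simp add: vec_eq_iff stm_def)
lemma stm_diff: "stm a b - r *\<^sub>R stm x y = (stm (a - r * x) (b - r * y) :: real^'k::finite^'k)"
  by (simp add: vec_eq_iff stm_def)
lemma sign_stm: "sign_mat (stm x y) = (stm (sgn x) (sgn y) :: real^'k::finite^'k)"
  by (simp add: vec_eq_iff stm_def sign_mat_def)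

lemma step_stm:
  assumes "CARD('k::finite) \<ge> 2" and "signgd \<eta> lam t = (stm x y :: real^'k^'k)"
  shows "signgd \<eta> lam (Suc t) = (stm
     (x - \<eta> t * sgn (- (real CARD('k) - 1) * phi (real CARD('k)) (x - y) + lam * x))
     (y - \<eta> t * sgn (phi (real CARD('k)) (x - y) + lam * y)) :: real^'k^'k)"
  using assms by (simp add: gradL_eq GD_stm stm_add sign_stm stm_diff)

lemma alpha_stm:
  assumes "x + (real CARD('k::finite) - 1) * y = 0"
  shows "alpha (stm x y :: real^'k^'k) = 0"
proof -
  let ?W = "stm x y :: real^'k^'k"
  have col: "(\<Sum>j\<in>UNIV. ?W $ j $ l) = 0" for l
  proof -
    have "(\<Sum>j\<in>UNIV. ?W $ j $ l) = (\<Sum>j\<in>UNIV. if j = l then x else y)"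
      by (intro sum.cong) (auto simp: stm_def)
    then show ?thesis using assms by (simp add: sum_if_eq)
  qed
  have row: "(\<Sum>j\<in>UNIV. (?W ** transpose ?W) $ i $ j) = 0" for i
  proof -
    have "(\<Sum>j\<in>UNIV. (?W ** transpose ?W) $ i $ j) = (\<Sum>j\<in>UNIV. \<Sum>l\<in>UNIV. ?W $ i $ l * ?W $ j $ l)"
      by (simp add: matrix_matrix_mult_def transpose_def)
    also have "\<dots> = (\<Sum>l\<in>UNIV. ?W $ i $ l * (\<Sum>j\<in>UNIV. ?W $ j $ l))"
      by (subst sum.swap) (simp add: sum_distrib_left)
    finally show ?thesis by (simp add: col)
  qed
  have "alpha ?W = (\<Sum>i\<in>UNIV. (1 / real CARD('k)) * (\<Sum>j\<in>UNIV. (?W ** transpose ?W) $ i $ j))"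
    unfolding alpha_def by (simp add: inner_vec_def Jhat_def sum_distrib_left mult.commute)
  then show ?thesis by (simp add: row)
qed


lemma phi_pos: "k \<ge> 2 \<Longrightarrow> phi k a > 0"
  unfolding phi_def by (smt (verit) divide_pos_pos exp_gt_zero real_sqrt_gt_zero)

lemma phi_lt: "k \<ge> 2 \<Longrightarrow> phi k a < 1 / sqrt (k - 1)"
proof -
  assume k: "k \<ge> 2"
  have c: "1 / sqrt (k - 1) > 0" using k by simp
  have "exp (a * (1 / sqrt (k - 1))) + k - 1 > 1" using k by (smt (verit) exp_gt_zero)
  then show ?thesis unfolding phi_def using c by (simp add: divide_less_eq)
qed

lemma phi_mono: "k \<ge> 2 \<Longrightarrow> a < b \<Longrightarrow> phi k b < phi k a"
proof -
  assume k: "k \<ge> 2" and ab: "a < b"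
  have c: "1 / sqrt (k - 1) > 0" using k by simp
  have "exp (a * (1 / sqrt (k - 1))) < exp (b * (1 / sqrt (k - 1)))"
    using ab c by (simp add: divide_strict_right_mono)
  moreover have "exp (a * (1 / sqrt (k - 1))) + k - 1 > 0" "exp (b * (1 / sqrt (k - 1))) + k - 1 > 0"
    using k by (smt (verit) exp_gt_zero)+
  ultimately show ?thesis unfolding phi_def using c
    by (intro divide_strict_left_mono mult_pos_pos) auto
qed

lemma phi_cont: "k \<ge> 2 \<Longrightarrow> isCont (phi k) a"
proof -
  assume k: "k \<ge> 2"
  have "\<And>a. exp (a * (1 / sqrt (k - 1))) + k - 1 \<noteq> 0" using k by (smt (verit) exp_gt_zero)
  then show ?thesis unfolding phi_def[abs_def] by (intro continuous_intros) auto
qed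


lemma stm_zero: "stm 0 0 = (0 :: real^'k::finite^'k)"
  by (simp add: vec_eq_iff stm_def)

theorem mainTheorem5:
  fixes lam :: real
  assumes "CARD('k::finite) \<ge> 2" and "lam > 0"
  shows "\<exists>\<eta> :: nat \<Rightarrow> real. (\<forall>t. \<eta> t > 0) \<and> \<eta> \<longlonglongrightarrow> 0 \<and>
           (\<lambda>t. alpha (signgd \<eta> lam t :: real^'k^'k)) \<longlonglongrightarrow> 0"
proof -
  define k where "k = real CARD('k)"
  define c where "c = 1 / sqrt (k - 1)"
  define \<phi> where "\<phi> = phi k"
  have k2: "k \<ge> 2" using assms(1) unfolding k_def by simp
  have lam: "lam > 0" by (rule assms(2))
  have cpos: "c > 0" using k2 unfolding c_def by simp
  have \<phi>pos: "\<phi> a > 0" for a unfolding \<phi>_def using phi_pos[OF k2] .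
  have \<phi>lt: "\<phi> a < c" for a unfolding \<phi>_def c_def using phi_lt[OF k2] .
  have \<phi>mono: "a < b \<Longrightarrow> \<phi> b < \<phi> a" for a b unfolding \<phi>_def using phi_mono[OF k2] .
  have \<phi>cont: "isCont \<phi> a" for a unfolding \<phi>_def using phi_cont[OF k2] .
  have step: "signgd \<eta> lam t = (stm x y :: real^'k^'k) \<Longrightarrow> signgd \<eta> lam (Suc t) = (stm
     (x - \<eta> t * sgn (- (k - 1) * \<phi> (x - y) + lam * x))
     (y - \<eta> t * sgn (\<phi> (x - y) + lam * y)) :: real^'k^'k)" for \<eta> t x y
    using step_stm[OF assms(1)] unfolding k_def \<phi>_def by blast
  have "\<exists>a. 0 \<le> a \<and> a \<le> k * c / lam \<and> lam * a - k * \<phi> a = 0"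
  proof (rule IVT)
    show "lam * 0 - k * \<phi> 0 \<le> 0" using \<phi>pos[of 0] k2 by simp
    have "k * \<phi> (k * c / lam) \<le> k * c" using \<phi>lt[of "k * c / lam"] k2 by simp
    then show "0 \<le> lam * (k * c / lam) - k * \<phi> (k * c / lam)" using lam by simp
    show "0 \<le> k * c / lam" using k2 cpos lam by simp
    show "\<forall>x. 0 \<le> x \<and> x \<le> k * c / lam \<longrightarrow> isCont (\<lambda>a. lam * a - k * \<phi> a) x"
      using \<phi>cont by (auto intro!: continuous_intros)
  qed
  then obtain as where as0: "0 \<le> as" and aseq: "lam * as = k * \<phi> as" by auto
  have aspos: "as > 0"
  proof (rule ccontr)
    assume "\<not> as > 0" then have "as = 0" using as0 by simp
    then show False using aseq \<phi>pos[of 0] k2 by simp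
  qed
  have \<phi>as: "\<phi> as = lam * as / k" using aseq k2 by simp
  have "\<exists>s. 0 \<le> s \<and> s \<le> as / 2 \<and> lam * s - \<phi> (2 * s) = 0"
  proof (rule IVT)
    show "lam * 0 - \<phi> (2 * 0) \<le> 0" using \<phi>pos[of 0] by simp
    have "lam * as / k \<le> lam * as / 2" using k2 lam aspos by (intro divide_left_mono) auto
    then show "0 \<le> lam * (as / 2) - \<phi> (2 * (as / 2))" using \<phi>as by simp
    show "0 \<le> as / 2" using aspos by simp
    show "\<forall>x. 0 \<le> x \<and> x \<le> as / 2 \<longrightarrow> isCont (\<lambda>s. lam * s - \<phi> (2 * s)) x"
      using \<phi>cont by (auto intro!: continuous_intros isCont_o2[OF _ \<phi>cont])
  qed
  then obtain s where s0: "0 \<le> s" and sle: "s \<le> as / 2" and seq: "lam * s = \<phi> (2 * s)" by auto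
  have spos: "s > 0"
  proof (rule ccontr)
    assume "\<not> s > 0" then have "s = 0" using s0 by simp
    then show False using seq \<phi>pos[of 0] by simp
  qed
  define T where "T = (stm ((k - 1) * as / k) (- as / k) :: real^'k^'k)"
  have fixT: "signgd \<eta> lam t = T \<Longrightarrow> signgd \<eta> lam (Suc t) = T" for \<eta> t
  proof -
    assume h: "signgd \<eta> lam t = T"
    have d: "(k - 1) * as / k - - as / k = as" using k2 by (simp add: field_simps)
    have e1: "- (k - 1) * \<phi> as + lam * ((k - 1) * as / k) = 0" using \<phi>as k2 by (simp add: field_simps)
    have e2: "\<phi> as + lam * (- as / k) = 0" using \<phi>as k2 by (simp add: field_simps)
    show ?thesis using step[OF h[unfolded T_def]] unfolding d e1 e2 T_def by simp
  qed
  have stay: "signgd \<eta> lam N = T \<Longrightarrow> N \<le> t \<Longrightarrow> signgd \<eta> lam t = T" for \<eta> N t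
  proof -
    assume h: "signgd \<eta> lam N = T" and Nt: "N \<le> t"
    from Nt show ?thesis
    proof (induction t rule: dec_induct)
      case base then show ?case using h by simp
    next
      case (step m) then show ?case using fixT by blast
    qed
  qed
  have alphaT: "alpha T = 0" unfolding T_def
    by (rule alpha_stm) (simp add: k_def[symmetric] field_simps)
  have final: "\<exists>\<eta> :: nat \<Rightarrow> real. (\<forall>t. \<eta> t > 0) \<and> \<eta> \<longlonglongrightarrow> 0 \<and>
           (\<lambda>t. alpha (signgd \<eta> lam t :: real^'k^'k)) \<longlonglongrightarrow> 0"
    if pos: "\<forall>t. \<eta> t > 0" and ev: "\<forall>t\<ge>N. \<eta> t = inverse (real (Suc t))"
      and hit: "signgd \<eta> lam N = T" for \<eta> N
  proof (intro exI conjI)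
    show "\<forall>t. \<eta> t > 0" by (rule pos)
    have "eventually (\<lambda>t. inverse (real (Suc t)) = \<eta> t) sequentially"
      using ev unfolding eventually_sequentially by (intro exI[of _ N]) auto
    then show "\<eta> \<longlonglongrightarrow> 0" using LIMSEQ_inverse_real_of_nat tendsto_cong by fastforce
    have "eventually (\<lambda>t. 0 = alpha (signgd \<eta> lam t :: real^'k^'k)) sequentially"
      using stay[OF hit] alphaT unfolding eventually_sequentially by (intro exI[of _ N]) auto
    then show "(\<lambda>t. alpha (signgd \<eta> lam t :: real^'k^'k)) \<longlonglongrightarrow> 0"
      using tendsto_const tendsto_cong by fastforce
  qed
  have W0: "signgd \<eta> lam 0 = (stm 0 0 :: real^'k^'k)" for \<eta> by (simp add: stm_zero)
  have s0a: "- (k - 1) * \<phi> (0 - 0) + lam * 0 < 0" using \<phi>pos[of 0] k2 by (simp add: mult_neg_pos)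
  have s0b: "\<phi> (0 - 0) + lam * 0 > 0" using \<phi>pos[of 0] by simp
  have W1: "signgd \<eta> lam 1 = (stm (\<eta> 0) (- \<eta> 0) :: real^'k^'k)" for \<eta>
    using step[OF W0[of \<eta>]] s0a s0b by simp
  show ?thesis
  proof (cases "k = 2")
    case True
    define \<eta> where "\<eta> = (\<lambda>t::nat. if t = 0 then as / 2 else inverse (real (Suc t)))"
    have hit1: "signgd \<eta> lam 1 = T" unfolding W1 T_def using True by (simp add: \<eta>_def)
    show ?thesis
      using final[of \<eta> 1, OF _ _ hit1] aspos by (auto simp: \<eta>_def)
  next
    case False
    then have k3: "k > 2" using k2 by simp
    have s_lt: "s < as / 2"
    proof (rule ccontr)
      assume "\<not> s < as / 2" then have "s = as / 2" using sle by simp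
      then have e: "2 * s = as" by simp
      have "lam * s = \<phi> as" using seq unfolding e .
      then have "lam * as / 2 = lam * as / k" using \<phi>as \<open>s = as / 2\<close> by simp
      moreover have "lam * as / k < lam * as / 2" using k3 lam aspos by (intro divide_strict_left_mono) auto
      ultimately show False by linarith
    qed
    have s_gt: "s > as / k"
    proof (rule ccontr)
      assume "\<not> s > as / k" then have sl: "s \<le> as / k" by simp
      have "2 * s \<le> 2 * as / k" using sl by simp
      also have "\<dots> < as" using k3 aspos by (simp add: field_simps)
      finally have "\<phi> as < \<phi> (2 * s)" by (rule \<phi>mono)
      then have "lam * as / k < lam * s" using \<phi>as seq by simp
      moreover have "lam * s \<le> lam * (as / k)" using sl lam by (intro mult_left_mono) auto
      ultimately show False by simp
    qed
    define \<eta> where "\<eta> = (\<lambda>t::nat. if t = 0 then s else if t = 1 then as - 2 * s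
                          else if t = 2 then s - as / k else inverse (real (Suc t)))"
    have W1': "signgd \<eta> lam 1 = (stm s (- s) :: real^'k^'k)" unfolding W1 by (simp add: \<eta>_def)
    have a1: "- (k - 1) * \<phi> (s - - s) + lam * s < 0" using seq k3 lam spos \<phi>pos[of "2 * s"] by (simp add: algebra_simps)
    have a2: "\<phi> (s - - s) + lam * - s = 0" using seq by simp
    have W2: "signgd \<eta> lam 2 = (stm (as - s) (- s) :: real^'k^'k)"
      using step[OF W1'] a1 a2 by (simp add: \<eta>_def numeral_2_eq_2)
    have b1: "- (k - 1) * \<phi> (as - s - - s) + lam * (as - s) < 0"
    proof -
      have "- (k - 1) * \<phi> (as - s - - s) + lam * (as - s) = lam * (as / k - s)"
        using \<phi>as k2 by (simp add: field_simps)
      then show ?thesis using s_gt lam by (simp add: mult_pos_neg)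
    qed
    have b2: "\<phi> (as - s - - s) + lam * - s < 0"
    proof -
      have "\<phi> (as - s - - s) + lam * - s = lam * (as / k - s)"
        using \<phi>as k2 by (simp add: field_simps)
      then show ?thesis using s_gt lam by (simp add: mult_pos_neg)
    qed
    have W3: "signgd \<eta> lam 3 = T"
    proof -
      have "signgd \<eta> lam (Suc 2) = (stm (as - s + \<eta> 2) (- s + \<eta> 2) :: real^'k^'k)"
        using step[OF W2] b1 b2 by simp
      moreover have "as - s + \<eta> 2 = (k - 1) * as / k" "- s + \<eta> 2 = - as / k"
        using k2 by (simp_all add: \<eta>_def field_simps)
      ultimately show ?thesis unfolding T_def by (simp add: numeral_3_eq_3)
    qed
    show ?thesis
      using final[of \<eta> 3, OF _ _ W3] s_lt s_gt spos aspos by (auto simp: \<eta>_def)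
  qed
qed

end
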